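(* Let $X$ be a compact metric space and $f\colon X\to X$ continuous with $h_{\mathrm{top}}(f)<\infty$. If $\Phi,\Psi\in C(X)^d$ satisfy condition (Q), then $I_0(\Phi,\Psi)=\operatorname{int}I(\Phi,\Psi)$.
   Context: $\mathcal{M}^f(X)$ is the set of $f$-invariant Borel probability measures. $\Phi=(\varphi_1,\dots,\varphi_d)$, $\Psi=(\psi_1,\dots,\psi_d)$, $\alpha*\Psi=(\alpha_i\psi_i)_i$. Condition (Q): $\int\psi_i\,d\mu\ge0$ for every $\mu\in\mathcal{M}^f(X)$ and $1\le i\le d$, with strict inequality whenever $\int\varphi_i\,d\mu=0$. $I(\Phi,\Psi)=\left\{\left(\frac{\int\varphi_1d\mu}{\int\psi_1d\mu},\dots,\frac{\int\varphi_dd\mu}{\int\psi_dd\mu}\right)\mid\mu\in\mathcal{M}^f(X)\right\}$. For $\alpha\in\mathbb{R}^d$, $J(\Phi,\Psi,\alpha)=\{\int(\Phi-\alpha*\Psi)\,d\mu\mid\mu\in\mathcal{M}^f(X)\}\subset\mathbb{R}^d$, and $I_0(\Phi,\Psi)=\{\alpha\in\mathbb{R}^d\mid0\in\operatorname{int}J(\Phi,\Psi,\alpha)\}$. *)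

theory Defs
  imports "HOL-Probability.Probability"
begin

definition separated_set ::
  "('a::metric_space \<Rightarrow> 'a) \<Rightarrow> 'a set \<Rightarrow> nat \<Rightarrow> real \<Rightarrow> 'a set \<Rightarrow> bool" where
  "separated_set f X n eps E \<longleftrightarrow> E \<subseteq> X \<and>
     (\<forall>x\<in>E. \<forall>y\<in>E. x \<noteq> y \<longrightarrow> (\<exists>k<n. dist ((f ^^ k) x) ((f ^^ k) y) > eps))"

definition sep_num :: "('a::metric_space \<Rightarrow> 'a) \<Rightarrow> 'a set \<Rightarrow> nat \<Rightarrow> real \<Rightarrow> ereal" where
  "sep_num f X n eps = (SUP E\<in>{E. finite E \<and> separated_set f X n eps E}. ereal (real (card E)))"

text \<open>Topological entropy (Bowen's definition via separated sets):
  h = lim_{eps->0} limsup_n (1/n) log s(n,eps); the limit is a supremum by monotonicity.\<close>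
definition htop :: "('a::metric_space \<Rightarrow> 'a) \<Rightarrow> 'a set \<Rightarrow> ereal" where
  "htop f X = (SUP eps\<in>{0<..}. limsup (\<lambda>n.
      if sep_num f X n eps = \<infinity> then \<infinity>
      else ereal (ln (real_of_ereal (sep_num f X n eps)) / real n)))"

definition inv_measures :: "('a::metric_space \<Rightarrow> 'a) \<Rightarrow> 'a set \<Rightarrow> 'a measure set" where
  "inv_measures f X = {M. prob_space M \<and> sets M = sets (restrict_space borel X) \<and>
      f \<in> measurable M M \<and> distr M M f = M}"

definition cond_Q ::
  "('a::metric_space \<Rightarrow> 'a) \<Rightarrow> 'a set \<Rightarrow> ('a \<Rightarrow> real^'d) \<Rightarrow> ('a \<Rightarrow> real^'d) \<Rightarrow> bool" where
  "cond_Q f X Phi Psi \<longleftrightarrow> (\<forall>M\<in>inv_measures f X. \<forall>i.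
      (\<integral>x. Psi x $ i \<partial>M) \<ge> 0 \<and>
      ((\<integral>x. Phi x $ i \<partial>M) = 0 \<longrightarrow> (\<integral>x. Psi x $ i \<partial>M) > 0))"

text \<open>I(Phi,Psi): vectors of ratios of integrals, over invariant measures for which all
  denominators are nonzero (so that the ratios are real numbers).\<close>
definition ratio_set ::
  "('a::metric_space \<Rightarrow> 'a) \<Rightarrow> 'a set \<Rightarrow> ('a \<Rightarrow> real^'d) \<Rightarrow> ('a \<Rightarrow> real^'d) \<Rightarrow> (real^'d) set" where
  "ratio_set f X Phi Psi = {(\<chi> i. (\<integral>x. Phi x $ i \<partial>M) / (\<integral>x. Psi x $ i \<partial>M)) | M.
      M \<in> inv_measures f X \<and> (\<forall>i. (\<integral>x. Psi x $ i \<partial>M) \<noteq> 0)}"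

definition J_set ::
  "('a::metric_space \<Rightarrow> 'a) \<Rightarrow> 'a set \<Rightarrow> ('a \<Rightarrow> real^'d) \<Rightarrow> ('a \<Rightarrow> real^'d) \<Rightarrow> real^'d \<Rightarrow> (real^'d) set" where
  "J_set f X Phi Psi alpha = {(\<chi> i. \<integral>x. (Phi x $ i - alpha $ i * Psi x $ i) \<partial>M) | M.
      M \<in> inv_measures f X}"

definition I0_set ::
  "('a::metric_space \<Rightarrow> 'a) \<Rightarrow> 'a set \<Rightarrow> ('a \<Rightarrow> real^'d) \<Rightarrow> ('a \<Rightarrow> real^'d) \<Rightarrow> (real^'d) set" where
  "I0_set f X Phi Psi = {alpha. 0 \<in> interior (J_set f X Phi Psi alpha)}"

end

theory Submission
  imports Defs
begin

lemma inv_space: "M \<in> inv_measures f X \<Longrightarrow> space M = X"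
  unfolding inv_measures_def
  by (auto dest!: sets_eq_imp_space_eq simp: space_restrict_space)

lemma bnd:
  fixes g :: "'a::metric_space \<Rightarrow> real"
  assumes "compact X" "continuous_on X g" shows "\<exists>C. \<forall>x\<in>X. \<bar>g x\<bar> \<le> C"
proof -
  have "bounded (g ` X)" by (rule compact_imp_bounded[OF compact_continuous_image[OF assms(2,1)]])
  then show ?thesis by (auto simp: bounded_iff)
qed

lemma mixture:
  assumes X: "compact X" and M1: "M1 \<in> inv_measures f X" and M2: "M2 \<in> inv_measures f X"
    and t: "0 \<le> t" "t \<le> 1"
  shows "\<exists>M\<in>inv_measures f X. \<forall>g::'a::metric_space \<Rightarrow> real. continuous_on X g \<longrightarrow>
     integral\<^sup>L M g = t * integral\<^sup>L M1 g + (1 - t) * integral\<^sup>L M2 g"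
proof -
  let ?K = "restrict_space borel X"
  let ?B = "measure_pmf (bernoulli_pmf t)"
  define N where "N = (\<lambda>b. if b then M1 else M2)"
  define M where "M = ?B \<bind> N"
  have p1: "prob_space M1" "sets M1 = sets ?K" "f \<in> measurable M1 M1" "distr M1 M1 f = M1"
    using M1 by (auto simp: inv_measures_def)
  have p2: "prob_space M2" "sets M2 = sets ?K" "f \<in> measurable M2 M2" "distr M2 M2 f = M2"
    using M2 by (auto simp: inv_measures_def)
  have Nsp: "N b \<in> space (subprob_algebra ?K)" for b
    using p1 p2 by (auto simp: N_def space_subprob_algebra prob_space_imp_subprob_space)
  have Nm: "N \<in> measurable ?B (subprob_algebra ?K)"
    using Nsp by simp
  have sM: "sets M = sets ?K" unfolding M_def
    by (rule sets_bind) (use Nsp in \<open>auto simp: space_subprob_algebra\<close>)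
  have spM: "space M = X" using sets_eq_imp_space_eq[OF sM] by (simp add: space_restrict_space)
  have sp1: "space M1 = X" using sets_eq_imp_space_eq[OF p1(2)] by (simp add: space_restrict_space)
  have sp2: "space M2 = X" using sets_eq_imp_space_eq[OF p2(2)] by (simp add: space_restrict_space)
  have em: "emeasure M A = emeasure M1 A * t + emeasure M2 A * (1 - t)" if "A \<in> sets ?K" for A
  proof -
    have "emeasure M A = \<integral>\<^sup>+b. emeasure (N b) A \<partial>?B"
      unfolding M_def by (rule emeasure_bind[OF _ Nm that]) simp
    also have "\<dots> = emeasure M1 A * t + emeasure M2 A * (1 - t)"
      using t by (simp add: N_def)
    finally show ?thesis .
  qed
  have "prob_space M"
  proof
    have "emeasure M (space M) = emeasure M1 X * t + emeasure M2 X * (1 - t)"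
      using em[of X] spM sM sets.top[of M] by simp
    also have "\<dots> = ennreal t + ennreal (1 - t)"
      using prob_space.emeasure_space_1[OF p1(1)] prob_space.emeasure_space_1[OF p2(1)] sp1 sp2 by simp
    also have "\<dots> = 1" using t by (simp flip: ennreal_plus)
    finally show "emeasure M (space M) = 1" .
  qed
  moreover have fM: "f \<in> measurable M M"
  proof -
    have "measurable M M = measurable M1 M1" by (rule measurable_cong_sets) (simp_all add: sM p1(2))
    then show ?thesis using p1(3) by simp
  qed
  moreover have "distr M M f = M"
  proof (rule measure_eqI)
    show "sets (distr M M f) = sets M" by simp
    fix A assume A: "A \<in> sets (distr M M f)"
    then have A': "A \<in> sets ?K" using sM by simp
    have pre: "f -` A \<inter> X \<in> sets ?K"
      using measurable_sets[OF p1(3), of A] A' p1(2) sp1 by simp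
    have e1: "emeasure M1 (f -` A \<inter> X) = emeasure M1 A"
      using emeasure_distr[OF p1(3), of A] A' p1 sp1 by simp
    have e2: "emeasure M2 (f -` A \<inter> X) = emeasure M2 A"
      using emeasure_distr[OF p2(3), of A] A' p2 sp2 by simp
    show "emeasure (distr M M f) A = emeasure M A"
      using emeasure_distr[OF fM, of A] A' sM spM em[OF pre] em[OF A'] e1 e2 by simp
  qed
  ultimately have MI: "M \<in> inv_measures f X" using sM by (simp add: inv_measures_def)
  have "integral\<^sup>L M g = t * integral\<^sup>L M1 g + (1 - t) * integral\<^sup>L M2 g"
    if g: "continuous_on X g" for g :: "'a \<Rightarrow> real"
  proof -
    have gm: "g \<in> borel_measurable ?K" by (rule borel_measurable_continuous_on_restrict[OF g])
    obtain C where C: "\<And>x. x \<in> space ?K \<Longrightarrow> \<bar>g x\<bar> \<le> C"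
      using bnd[OF X g] by (auto simp: space_restrict_space)
    have "integral\<^sup>L M g = \<integral>b. integral\<^sup>L (N b) g \<partial>?B"
      unfolding M_def
      by (rule integral_bind[OF gm C Nm, where B'=1])
        (auto intro!: prob_space_imp_subprob_space measure_pmf.finite_measure
              simp: N_def prob_space.emeasure_space_1 p1 p2)
    also have "\<dots> = t * integral\<^sup>L M1 g + (1 - t) * integral\<^sup>L M2 g"
      using t by (simp add: N_def)
    finally show ?thesis .
  qed
  with MI show ?thesis by blast
qed

lemma sep0:
  fixes S :: "'n::euclidean_space set"
  assumes "convex S" "0 \<notin> interior S"
  shows "\<exists>u. u \<noteq> 0 \<and> (\<forall>p\<in>S. 0 \<le> u \<bullet> p)"
proof (cases "interior S = {}")
  case True
  then obtain a b where a: "a \<noteq> 0" "S \<subseteq> {x. a \<bullet> x = b}"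
    using empty_interior_subset_hyperplane[OF assms(1)] by metis
  show ?thesis
  proof (cases "b \<ge> 0")
    case True then show ?thesis using a by (intro exI[of _ a]) auto
  next
    case False then show ?thesis using a by (intro exI[of _ "-a"]) auto
  qed
next
  case False
  obtain u where u: "u \<noteq> 0" "\<forall>x\<in>interior S. 0 \<le> u \<bullet> x"
    using separating_hyperplane_set_0[OF convex_interior[OF assms(1)] assms(2)] by blast
  have "closure (interior S) \<subseteq> {x. 0 \<le> u \<bullet> x}"
    by (rule closure_minimal) (use u closed_halfspace_ge[where a=u and b=0] in auto)
  hence "closure S \<subseteq> {x. 0 \<le> u \<bullet> x}" using convex_closure_interior[OF assms(1) False] by simp
  then show ?thesis using u closure_subset by blast
qed

lemma integ:
  fixes g :: "'a::metric_space \<Rightarrow> real"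
  assumes M: "M \<in> inv_measures f X" and g: "continuous_on X g" and C: "\<forall>x\<in>X. \<bar>g x\<bar> \<le> C"
  shows "integrable M g" "\<bar>integral\<^sup>L M g\<bar> \<le> C"
proof -
  have P: "prob_space M" and S: "sets M = sets (restrict_space borel X)"
    using M by (auto simp: inv_measures_def)
  have sp: "space M = X" using inv_space[OF M] .
  have gm: "g \<in> borel_measurable M"
    using borel_measurable_continuous_on_restrict[OF g] by (simp add: measurable_cong_sets[OF S refl])
  interpret prob_space M by (rule P)
  show i: "integrable M g" by (rule integrable_const_bound[where B=C]) (use C sp gm in auto)
  have "\<bar>integral\<^sup>L M g\<bar> \<le> integral\<^sup>L M (\<lambda>x. \<bar>g x\<bar>)" using integral_norm_bound[of M g] by simp
  also have "\<dots> \<le> integral\<^sup>L M (\<lambda>x. C)" by (rule integral_mono) (use i C sp in auto)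
  also have "\<dots> = C" by (simp add: prob_space)
  finally show "\<bar>integral\<^sup>L M g\<bar> \<le> C" .
qed

theorem lemma4p7:
  fixes X :: "'a::metric_space set" and f :: "'a \<Rightarrow> 'a"
    and Phi Psi :: "'a \<Rightarrow> real^'d"
  assumes "compact X"
    and "continuous_on X f" and "f ` X \<subseteq> X"
    and "htop f X < \<infinity>"
    and "continuous_on X Phi" and "continuous_on X Psi"
    and "cond_Q f X Phi Psi"
  shows "I0_set f X Phi Psi = interior (ratio_set f X Phi Psi)"
proof -
  let ?Inv = "inv_measures f X"
  define P where "P M = (\<chi> i. \<integral>x. Phi x $ i \<partial>M)" for M
  define Q where "Q M = (\<chi> i. \<integral>x. Psi x $ i \<partial>M)" for M
  have cPhi: "continuous_on X (\<lambda>x. Phi x $ i)" for i using assms(5) by (rule continuous_on_component)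
  have cPsi: "continuous_on X (\<lambda>x. Psi x $ i)" for i using assms(6) by (rule continuous_on_component)
  obtain C0 where C0: "\<forall>x\<in>X. \<bar>norm (Psi x)\<bar> \<le> C0"
    using bnd[OF assms(1) continuous_on_norm[OF assms(6)]] by blast
  define C where "C = \<bar>C0\<bar> + 1"
  have Cpos: "C > 0" by (simp add: C_def add_nonneg_pos)
  have Cb: "\<bar>Q M $ i\<bar> \<le> C" if "M \<in> ?Inv" for M i
  proof -
    have "\<forall>x\<in>X. \<bar>Psi x $ i\<bar> \<le> C"
    proof
      fix x assume "x \<in> X"
      have "\<bar>Psi x $ i\<bar> \<le> norm (Psi x)" by (rule component_le_norm_cart)
      also have "\<dots> \<le> C" using C0 \<open>x \<in> X\<close> by (auto simp: C_def)
      finally show "\<bar>Psi x $ i\<bar> \<le> C" .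
    qed
    then show ?thesis using integ(2)[OF that cPsi] by (simp add: Q_def)
  qed
  have intg: "integrable M g" if "M \<in> ?Inv" "continuous_on X g" for M and g :: "'a \<Rightarrow> real"
    using bnd[OF assms(1) that(2)] integ(1)[OF that(1) that(2)] by blast
  have Jvec: "(\<chi> i. \<integral>x. (Phi x $ i - c $ i * Psi x $ i) \<partial>M) = (\<chi> i. P M $ i - c $ i * Q M $ i)"
    if "M \<in> ?Inv" for M c
  proof -
    have "(\<integral>x. (Phi x $ i - c $ i * Psi x $ i) \<partial>M) = P M $ i - c $ i * Q M $ i" for i
    proof -
      have "integrable M (\<lambda>x. c $ i * Psi x $ i)" using intg[OF that cPsi] by simp
      then show ?thesis using intg[OF that cPhi] by (simp add: P_def Q_def)
    qed
    then show ?thesis by (simp add: vec_eq_iff)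
  qed
  have Jset: "J_set f X Phi Psi c = {(\<chi> i. P M $ i - c $ i * Q M $ i) | M. M \<in> ?Inv}" for c
    unfolding J_set_def Setcompr_eq_image by (rule image_cong[OF refl Jvec])
  have convJ: "convex (J_set f X Phi Psi c)" for c
  proof (rule convexI)
    fix x y and u v :: real assume "x \<in> J_set f X Phi Psi c" "y \<in> J_set f X Phi Psi c"
      and uv: "0 \<le> u" "0 \<le> v" "u + v = 1"
    then obtain M1 M2 where M1: "M1 \<in> ?Inv" "x = (\<chi> i. \<integral>x. (Phi x $ i - c $ i * Psi x $ i) \<partial>M1)"
      and M2: "M2 \<in> ?Inv" "y = (\<chi> i. \<integral>x. (Phi x $ i - c $ i * Psi x $ i) \<partial>M2)"
      unfolding J_set_def by blast
    obtain M where M: "M \<in> ?Inv" and mix: "\<forall>g::'a \<Rightarrow> real. continuous_on X g \<longrightarrow>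
       integral\<^sup>L M g = u * integral\<^sup>L M1 g + (1 - u) * integral\<^sup>L M2 g"
      using mixture[OF assms(1) M1(1) M2(1), of u] uv by auto
    have cg: "continuous_on X (\<lambda>x. Phi x $ i - c $ i * Psi x $ i)" for i
      by (rule continuous_on_diff[OF cPhi continuous_on_mult[OF continuous_on_const cPsi]])
    have "u *\<^sub>R x + v *\<^sub>R y = (\<chi> i. \<integral>x. (Phi x $ i - c $ i * Psi x $ i) \<partial>M)"
      using mix cg uv by (simp add: vec_eq_iff M1(2) M2(2))
    then show "u *\<^sub>R x + v *\<^sub>R y \<in> J_set f X Phi Psi c" unfolding J_set_def using M by blast
  qed
  have toI: "b \<in> ratio_set f X Phi Psi" if MI: "M \<in> ?Inv" and Pb: "\<forall>i. P M $ i = b $ i * Q M $ i" for M b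
  proof -
    have Qne: "Q M $ i \<noteq> 0" for i
    proof
      assume Q0: "Q M $ i = 0"
      then have "P M $ i = 0" using Pb by simp
      then have "Q M $ i > 0" using assms(7) MI unfolding cond_Q_def P_def Q_def by auto
      then show False using Q0 by simp
    qed
    have "b = (\<chi> i. (\<integral>x. Phi x $ i \<partial>M) / (\<integral>x. Psi x $ i \<partial>M))"
      using Qne Pb by (simp add: vec_eq_iff P_def Q_def field_simps)
    then show ?thesis unfolding ratio_set_def
      by (intro CollectI exI[of _ M]) (use MI Qne in \<open>auto simp: Q_def\<close>)
  qed
  have fromI: "\<exists>M\<in>?Inv. (\<forall>i. Q M $ i > 0) \<and> (\<forall>i. P M $ i = b $ i * Q M $ i)"
    if "b \<in> ratio_set f X Phi Psi" for b
  proof -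
    from that obtain M where M: "M \<in> ?Inv" "\<forall>i. (\<integral>x. Psi x $ i \<partial>M) \<noteq> 0"
      "b = (\<chi> i. (\<integral>x. Phi x $ i \<partial>M) / (\<integral>x. Psi x $ i \<partial>M))"
      unfolding ratio_set_def by blast
    have "Q M $ i > 0" for i
      using assms(7) M(1) M(2)[rule_format, of i] unfolding cond_Q_def Q_def by force
    moreover have "P M $ i = b $ i * Q M $ i" for i using M(2,3) by (simp add: P_def Q_def)
    ultimately show ?thesis using M(1) by blast
  qed
  show ?thesis
  proof (rule set_eqI, rule iffI)
    fix a assume "a \<in> I0_set f X Phi Psi"
    then have "0 \<in> interior (J_set f X Phi Psi a)" by (simp add: I0_set_def)
    then obtain r where r: "r > 0" "ball 0 r \<subseteq> J_set f X Phi Psi a" by (auto simp: mem_interior)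
    define e where "e = r / (2 * C)"
    have e: "e > 0" using r Cpos by (simp add: e_def)
    have "ball a e \<subseteq> ratio_set f X Phi Psi"
    proof
      fix b assume b: "b \<in> ball a e"
      have "0 \<in> J_set f X Phi Psi b"
      proof (rule ccontr)
        assume "0 \<notin> J_set f X Phi Psi b"
        then obtain u where u: "u \<noteq> 0" "\<forall>p\<in>J_set f X Phi Psi b. 0 \<le> u \<bullet> p"
          using separating_hyperplane_set_0[OF convJ] by blast
        have nu: "norm u > 0" using u by simp
        define w where "w = - ((r/2) / norm u) *\<^sub>R u"
        have "norm w = r / 2" using nu r by (simp add: w_def abs_divide)
        then have "w \<in> J_set f X Phi Psi a" using r by (auto simp: dist_norm)
        then obtain M where M: "M \<in> ?Inv" "w = (\<chi> i. P M $ i - a $ i * Q M $ i)" using Jset by auto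
        define d where "d = (\<chi> i. (a $ i - b $ i) * Q M $ i)"
        have pJ: "w + d \<in> J_set f X Phi Psi b"
        proof -
          have "w + d = (\<chi> i. P M $ i - b $ i * Q M $ i)"
            by (simp add: M(2) d_def vec_eq_iff algebra_simps)
          then show ?thesis using M(1) Jset[of b] by auto
        qed
        have nd: "norm d \<le> C * norm (a - b)"
        proof -
          have "norm d \<le> norm (C *\<^sub>R (a - b))"
          proof (rule norm_le_componentwise_cart)
            fix i
            have "\<bar>d $ i\<bar> = \<bar>a $ i - b $ i\<bar> * \<bar>Q M $ i\<bar>" by (simp add: d_def abs_mult)
            also have "\<dots> \<le> \<bar>a $ i - b $ i\<bar> * C" by (rule mult_left_mono) (use Cb[OF M(1)] in auto)
            also have "\<dots> = \<bar>(C *\<^sub>R (a - b)) $ i\<bar>" using Cpos by (simp add: abs_mult)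
            finally show "norm (d $ i) \<le> norm ((C *\<^sub>R (a - b)) $ i)" by simp
          qed
          also have "\<dots> = C * norm (a - b)" using Cpos by simp
          finally show ?thesis .
        qed
        have uw: "u \<bullet> w = - (r/2) * norm u"
        proof -
          have "u \<bullet> w = - ((r/2) / norm u) * (u \<bullet> u)" by (simp add: w_def)
          also have "u \<bullet> u = norm u * norm u" by (simp add: power2_norm_eq_inner[symmetric] power2_eq_square)
          finally show ?thesis using nu by (simp add: field_simps)
        qed
        have ab: "C * norm (a - b) < r / 2"
        proof -
          have "norm (a - b) < e" using b by (simp add: dist_norm)
          then have "C * norm (a - b) < C * e" using Cpos by simp
          also have "C * e = r / 2" using Cpos by (simp add: e_def)
          finally show ?thesis .
        qed
        have "u \<bullet> d \<le> norm u * norm d" by (rule norm_cauchy_schwarz)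
        also have "\<dots> \<le> norm u * (C * norm (a - b))" by (rule mult_left_mono[OF nd]) simp
        also have "\<dots> < norm u * (r / 2)" using ab nu by simp
        finally have "u \<bullet> (w + d) < 0" using uw by (simp add: inner_add_right mult.commute)
        with u pJ show False by force
      qed
      then obtain M where M: "M \<in> ?Inv" "0 = (\<chi> i. P M $ i - b $ i * Q M $ i)" using Jset[of b] by auto
      then have "\<forall>i. P M $ i = b $ i * Q M $ i" by (simp add: vec_eq_iff)
      then show "b \<in> ratio_set f X Phi Psi" using toI M(1) by blast
    qed
    then show "a \<in> interior (ratio_set f X Phi Psi)" using e by (auto simp: mem_interior)
  next
    fix a assume "a \<in> interior (ratio_set f X Phi Psi)"
    then obtain e where e: "e > 0" "ball a e \<subseteq> ratio_set f X Phi Psi" by (auto simp: mem_interior)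
    have "0 \<in> interior (J_set f X Phi Psi a)"
    proof (rule ccontr)
      assume "0 \<notin> interior (J_set f X Phi Psi a)"
      then obtain u where u: "u \<noteq> 0" "\<forall>p\<in>J_set f X Phi Psi a. 0 \<le> u \<bullet> p"
        using sep0[OF convJ] by blast
      have nu: "norm u > 0" using u by simp
      define k where "k = (e/2) / norm u"
      have k: "k > 0" using e nu by (simp add: k_def)
      define b where "b = a - k *\<^sub>R u"
      have "dist a b = e / 2" using k nu e(1) by (simp add: b_def dist_norm k_def)
      then have "b \<in> ratio_set f X Phi Psi" using e by auto
      then obtain M where M: "M \<in> ?Inv" "\<forall>i. Q M $ i > 0" "\<forall>i. P M $ i = b $ i * Q M $ i"
        using fromI by blast
      let ?p = "(\<chi> i. P M $ i - a $ i * Q M $ i)"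
      have pJ: "?p \<in> J_set f X Phi Psi a" using Jset M(1) by auto
      have pe: "?p = (\<chi> i. - k * (u $ i * Q M $ i))" using M(3) by (simp add: vec_eq_iff b_def algebra_simps)
      obtain j where j: "u $ j \<noteq> 0" using u(1) by (auto simp: vec_eq_iff)
      have pos: "0 < (\<Sum>i\<in>UNIV. (u $ i)\<^sup>2 * Q M $ i)"
        by (rule sum_pos2[where i=j]) (use j M(2) in \<open>auto intro!: mult_nonneg_nonneg simp: order_less_imp_le\<close>)
      have "u \<bullet> ?p = - k * (\<Sum>i\<in>UNIV. (u $ i)\<^sup>2 * Q M $ i)"
        by (simp add: pe inner_vec_def sum_distrib_left power2_eq_square algebra_simps)
      also have "\<dots> < 0" using k pos by (simp add: mult_pos_pos)
      finally have "u \<bullet> ?p < 0" .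
      with u pJ show False by force
    qed
    then show "a \<in> I0_set f X Phi Psi" by (simp add: I0_set_def)
  qed
qed

end
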